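(* The map $\phi$ from the poset $\mathcal{FP}$ of nonempty faces of $V_O$ (ordered by inclusion) to the poset $\mathcal{SC}$, given by $\phi(F)=\bigcup_{\lambda\in\Xi_1,\ F\subseteq H_\lambda}\mathrm{supp}(\lambda)$, is injective and order-preserving: if $F_1\subseteq F_2$ then $\phi(F_1)\preceq\phi(F_2)$.
   Context: $G=(V,E)$ is a finite connected graph, possibly with parallel edges and loops; $\mathbb E$ is the set of oriented edges ($e$ and its reverse $\bar e$). Real $1$-chains $x:\mathbb E\to\mathbb R$ satisfy $x_{\bar e}=-x_e$; $\langle x,y\rangle=\sum_{e\in E}x_ey_e$, $q(x)=\langle x,x\rangle$. A flow satisfies $\sum_{e\text{ with tail }v}x_e=0$ at every vertex $v$; $H$ is the space of real flows and $\Lambda$ the lattice of integer flows. $V_O=\{x\in H: q(x)\le q(x-\mu)\ \forall\mu\in\Lambda\}$. For a flow $x$, $\mathrm{supp}(x)=\{e\in\mathbb E: x_e>0\}$. A circuit is an orientation of a cycle as a directed cycle; $x^C_e=1$ if $e\in C$, $-1$ if $\bar e\in C$, $0$ otherwise. $\Xi_1=\{x^C: C\text{ a circuit}\}$; for $\lambda\in\Xi_1$, $H_\lambda=\{x\in H: 2\langle x,\lambda\rangle=q(\lambda)\}$. $\mathcal{SC}$ is the set of pairs $(H',D)$ with $H'$ a subgraph of $G$ (identified with its edge set) and $D$ a strongly connected orientation of $H'$ (on each component any two vertices are joined by directed paths both ways), ordered by $(H_1,D_1)\preceq(H_2,D_2)$ iff $H_2\subseteq H_1$ and $D_2$ is the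 restriction of $D_1$ to $H_2$. *)

theory Defs
  imports "HOL-Analysis.Analysis"
begin

text \<open>Graph G: vertices = finite type 'v (V = UNIV), edges = finite type 'e (E = UNIV),
  each edge e with a reference orientation from tail e to head e (loops and parallel
  edges allowed). Oriented edges are pairs (e, True) = e and (e, False) = reversed e.
  Real 1-chains are vectors x :: real^'e, x $ e being the value on the reference
  orientation; hence the inner product x \<bullet> y is \<Sum>e\<in>E. x_e y_e.\<close>

type_synonym 'e oedge = "'e \<times> bool"

definition otail :: "('e \<Rightarrow> 'v) \<Rightarrow> ('e \<Rightarrow> 'v) \<Rightarrow> 'e oedge \<Rightarrow> 'v" where
  "otail tail head d = (if snd d then tail (fst d) else head (fst d))"

definition ohead :: "('e \<Rightarrow> 'v) \<Rightarrow> ('e \<Rightarrow> 'v) \<Rightarrow> 'e oedge \<Rightarrow> 'v" where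
  "ohead tail head d = (if snd d then head (fst d) else tail (fst d))"

definition rev_oedge :: "'e oedge \<Rightarrow> 'e oedge" where
  "rev_oedge d = (fst d, \<not> snd d)"

definition ochain :: "real^'e \<Rightarrow> 'e oedge \<Rightarrow> real" where
  "ochain x d = (if snd d then x $ fst d else - (x $ fst d))"

definition graph_connected :: "('e \<Rightarrow> 'v) \<Rightarrow> ('e \<Rightarrow> 'v) \<Rightarrow> bool" where
  "graph_connected tail head \<longleftrightarrow>
     (\<forall>u v. (u, v) \<in> ({(tail e, head e) | e. True} \<union> {(head e, tail e) | e. True})\<^sup>*)"

definition is_flow :: "('e::finite \<Rightarrow> 'v) \<Rightarrow> ('e \<Rightarrow> 'v) \<Rightarrow> real^'e \<Rightarrow> bool" where
  "is_flow tail head x \<longleftrightarrow> (\<forall>v. (\<Sum>d\<in>{d. otail tail head d = v}. ochain x d) = 0)"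

definition flows :: "('e::finite \<Rightarrow> 'v) \<Rightarrow> ('e \<Rightarrow> 'v) \<Rightarrow> (real^'e) set" where
  "flows tail head = {x. is_flow tail head x}"

definition int_flows :: "('e::finite \<Rightarrow> 'v) \<Rightarrow> ('e \<Rightarrow> 'v) \<Rightarrow> (real^'e) set" where
  "int_flows tail head = {x \<in> flows tail head. \<forall>e. x $ e \<in> \<int>}"

definition qf :: "real^'e \<Rightarrow> real" where
  "qf x = x \<bullet> x"

definition voronoi_cell :: "('e::finite \<Rightarrow> 'v) \<Rightarrow> ('e \<Rightarrow> 'v) \<Rightarrow> (real^'e) set" where
  "voronoi_cell tail head = {x \<in> flows tail head. \<forall>\<mu>\<in>int_flows tail head. qf x \<le> qf (x - \<mu>)}"

definition supp :: "real^'e \<Rightarrow> 'e oedge set" where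
  "supp x = {d. ochain x d > 0}"

text \<open>A circuit: orientation of a cycle as a directed cycle, given as the set of its
  oriented edges d_0,...,d_{k-1} (k \<ge> 1) with distinct underlying edges, distinct
  tails, and head d_i = tail d_{(i+1) mod k}. Loops give circuits of length 1.\<close>
definition is_circuit :: "('e \<Rightarrow> 'v) \<Rightarrow> ('e \<Rightarrow> 'v) \<Rightarrow> 'e oedge set \<Rightarrow> bool" where
  "is_circuit tail head C \<longleftrightarrow>
     (\<exists>ds. length ds \<ge> 1 \<and> distinct (map fst ds) \<and> distinct (map (otail tail head) ds) \<and>
        (\<forall>i<length ds. ohead tail head (ds ! i) = otail tail head (ds ! ((i + 1) mod length ds))) \<and>
        C = set ds)"

definition circuit_vec :: "'e oedge set \<Rightarrow> real^'e" where
  "circuit_vec C = (\<chi> e. if (e, True) \<in> C then 1 else if (e, False) \<in> C then -1 else 0)"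

definition Xi1 :: "('e::finite \<Rightarrow> 'v) \<Rightarrow> ('e \<Rightarrow> 'v) \<Rightarrow> (real^'e) set" where
  "Xi1 tail head = {circuit_vec C | C. is_circuit tail head C}"

definition Hlam :: "('e::finite \<Rightarrow> 'v) \<Rightarrow> ('e \<Rightarrow> 'v) \<Rightarrow> real^'e \<Rightarrow> (real^'e) set" where
  "Hlam tail head lam = {x \<in> flows tail head. 2 * (x \<bullet> lam) = qf lam}"

definition FP :: "('e::finite \<Rightarrow> 'v) \<Rightarrow> ('e \<Rightarrow> 'v) \<Rightarrow> (real^'e) set set" where
  "FP tail head = {F. F face_of voronoi_cell tail head \<and> F \<noteq> {}}"

text \<open>SC: pairs (S, D), S a set of edges (the subgraph H'), D a set of oriented edges
  which is an orientation of S that is strongly connected on each component of S.\<close>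
definition strongly_connected_orientation ::
    "('e \<Rightarrow> 'v) \<Rightarrow> ('e \<Rightarrow> 'v) \<Rightarrow> 'e set \<Rightarrow> 'e oedge set \<Rightarrow> bool" where
  "strongly_connected_orientation tail head S D \<longleftrightarrow>
     (\<forall>d\<in>D. fst d \<in> S) \<and>
     (\<forall>e\<in>S. ((e, True) \<in> D) \<noteq> ((e, False) \<in> D)) \<and>
     (\<forall>u v. (u, v) \<in> ({(tail e, head e) | e. e \<in> S} \<union> {(head e, tail e) | e. e \<in> S})\<^sup>* \<longrightarrow>
        (u, v) \<in> {(otail tail head d, ohead tail head d) | d. d \<in> D}\<^sup>* \<and>
        (v, u) \<in> {(otail tail head d, ohead tail head d) | d. d \<in> D}\<^sup>*)"

definition SC :: "('e \<Rightarrow> 'v) \<Rightarrow> ('e \<Rightarrow> 'v) \<Rightarrow> ('e set \<times> 'e oedge set) set" where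
  "SC tail head = {(S, D). strongly_connected_orientation tail head S D}"

definition sc_le :: "('e set \<times> 'e oedge set) \<Rightarrow> ('e set \<times> 'e oedge set) \<Rightarrow> bool" where
  "sc_le P1 P2 \<longleftrightarrow> fst P2 \<subseteq> fst P1 \<and> snd P2 = {d \<in> snd P1. fst d \<in> fst P2}"

definition phi :: "('e::finite \<Rightarrow> 'v) \<Rightarrow> ('e \<Rightarrow> 'v) \<Rightarrow> (real^'e) set \<Rightarrow> ('e set \<times> 'e oedge set)" where
  "phi tail head F =
     (let D = \<Union>{supp lam | lam. lam \<in> Xi1 tail head \<and> F \<subseteq> Hlam tail head lam} in (fst ` D, D))"

end

theory Submission imports Defs begin

lemma rev_oedge_simps[simp]:
  "otail t h (rev_oedge d) = ohead t h d" "ohead t h (rev_oedge d) = otail t h d"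
  "fst (rev_oedge d) = fst d" "rev_oedge (rev_oedge d) = d" "rev_oedge d \<noteq> d"
  "ochain x (rev_oedge d) = - ochain x d"
  by (auto simp: rev_oedge_def otail_def ohead_def ochain_def prod_eq_iff)

lemma fst_fiber: "{d\<in>C. fst d = e} = (if (e,True)\<in>C then {(e,True)} else {}) \<union> (if (e,False)\<in>C then {(e,False)} else {})"
  apply (rule set_eqI) apply (case_tac x) apply (rename_tac a b) apply (case_tac b) apply simp apply blast apply simp apply blast done

lemma inj_rev_oedge: "inj rev_oedge"
  unfolding inj_def rev_oedge_def by (auto simp: prod_eq_iff)

definition cst :: "real^'e \<Rightarrow> 'e oedge \<Rightarrow> real" where "cst x d = 1 - 2 * ochain x d"
definition wt :: "real^'e \<Rightarrow> 'e oedge list \<Rightarrow> real" where "wt x ws = sum_list (map (cst x) ws)"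

context
  fixes tail head :: "'e::finite \<Rightarrow> 'v::finite"
begin

abbreviation "ot \<equiv> otail tail head"
abbreviation "oh \<equiv> ohead tail head"

definition crel :: "'e oedge set \<Rightarrow> ('v \<times> 'v) set" where
  "crel D = {(ot d, oh d) | d. d \<in> D}"

lemma circuit_basic:
  assumes "is_circuit tail head C"
  shows "finite C" "C \<noteq> {}" "inj_on fst C" "inj_on ot C" "inj_on oh C" "ot ` C = oh ` C"
    "\<And>d. d \<in> C \<Longrightarrow> (oh d, ot d) \<in> (crel C)\<^sup>*"
proof -
  obtain ds where L: "length ds \<ge> 1" and D1: "distinct (map fst ds)" and D2: "distinct (map ot ds)"
    and N: "\<forall>i<length ds. oh (ds ! i) = ot (ds ! ((i + 1) mod length ds))" and C: "C = set ds"
    using assms unfolding is_circuit_def by blast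
  define n where "n = length ds"
  show "finite C" using C by simp
  show "C \<noteq> {}" using C L by (cases ds) auto
  show "inj_on fst C" using D1 C by (simp add: distinct_map)
  show io: "inj_on ot C" using D2 C by (simp add: distinct_map)
  have s1: "oh ` C \<subseteq> ot ` C"
  proof
    fix v assume "v \<in> oh ` C"
    then obtain i where "i < n" "v = oh (ds ! i)" using C n_def by (auto simp: in_set_conv_nth)
    then have "v = ot (ds ! ((i+1) mod n))" using N n_def by auto
    moreover have "0 < n" using L n_def by linarith
    then have "(i+1) mod n < n" by simp
    ultimately show "v \<in> ot ` C" using C n_def by auto
  qed
  have s2: "ot ` C \<subseteq> oh ` C"
  proof
    fix v assume "v \<in> ot ` C"
    then obtain j where j: "j < n" "v = ot (ds ! j)" using C n_def by (auto simp: in_set_conv_nth)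
    define i where "i = (if j = 0 then n - 1 else j - 1)"
    have "i < n" "(i + 1) mod n = j" using j L n_def unfolding i_def by auto
    then have "v = oh (ds ! i)" using N n_def j by auto
    then show "v \<in> oh ` C" using C n_def \<open>i < n\<close> by auto
  qed
  show eq: "ot ` C = oh ` C" using s1 s2 by blast
  show "inj_on oh C"
  proof (rule eq_card_imp_inj_on)
    show "finite C" using C by simp
    show "card (oh ` C) = card C" using eq card_image[OF io] by simp
  qed
  have step: "(ot (ds ! i), ot (ds ! ((i+1) mod n))) \<in> crel C" if "i < n" for i
  proof -
    have m: "ds ! i \<in> C" using that C n_def by simp
    have "oh (ds ! i) = ot (ds ! ((i+1) mod n))" using N that n_def by simp
    then show ?thesis using m unfolding crel_def by (metis (mono_tags, lifting) mem_Collect_eq)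
  qed
  have fwd: "(ot (ds ! i), ot (ds ! j)) \<in> (crel C)\<^sup>*" if "i \<le> j" "j < n" for i j
    using that
  proof (induction j)
    case 0 then show ?case by auto
  next
    case (Suc j)
    show ?case
    proof (cases "i = Suc j")
      case True then show ?thesis by auto
    next
      case False
      then have "(ot (ds ! i), ot (ds ! j)) \<in> (crel C)\<^sup>*" using Suc by auto
      moreover have "(ot (ds ! j), ot (ds ! Suc j)) \<in> crel C" using step[of j] Suc by auto
      ultimately show ?thesis by (meson rtrancl.rtrancl_into_rtrancl)
    qed
  qed
  have all: "(ot (ds ! i), ot (ds ! j)) \<in> (crel C)\<^sup>*" if "i < n" "j < n" for i j
  proof -
    have "(ot (ds ! i), ot (ds ! (n-1))) \<in> (crel C)\<^sup>*" using fwd that by auto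
    moreover have "(ot (ds ! (n-1)), ot (ds ! 0)) \<in> crel C"
    proof -
      have e1: "n - 1 + 1 = n" "n - 1 < n" using L n_def by linarith+
      have "(ot (ds!(n-1)), ot (ds!((n-1+1) mod n))) \<in> crel C" using step[of "n-1"] e1 by blast
      then show ?thesis unfolding e1 by simp
    qed
    moreover have "(ot (ds ! 0), ot (ds ! j)) \<in> (crel C)\<^sup>*" using fwd that by auto
    ultimately show ?thesis by (meson rtrancl.rtrancl_into_rtrancl rtrancl_trans)
  qed
  show "(oh d, ot d) \<in> (crel C)\<^sup>*" if dC: "d \<in> C" for d
  proof -
    obtain i where i: "i < n" "d = ds ! i" using dC C n_def by (auto simp: in_set_conv_nth)
    have "oh d \<in> ot ` C" using eq dC by auto
    then obtain j where j: "j < n" "oh d = ot (ds ! j)" using C n_def by (auto simp: in_set_conv_nth)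
    show ?thesis using all[OF j(1) i(1)] i j by simp
  qed
qed

lemma circuit_no_rev:
  assumes "is_circuit tail head C" "d \<in> C" shows "rev_oedge d \<notin> C"
proof
  assume r: "rev_oedge d \<in> C"
  have "rev_oedge d = d"
    using inj_onD[OF circuit_basic(3)[OF assms(1)] _ r assms(2)] by simp
  then show False by simp
qed

lemma ochain_circuit:
  assumes "is_circuit tail head C"
  shows "ochain (circuit_vec C) d = of_bool (d \<in> C) - of_bool (rev_oedge d \<in> C)"
proof -
  obtain e b where d: "d = (e, b)" by force
  show ?thesis
    using circuit_no_rev[OF assms, of "(e,True)"] circuit_no_rev[OF assms, of "(e,False)"]
    by (cases b; cases "(e,True)\<in>C"; cases "(e,False)\<in>C") (simp_all add: d ochain_def circuit_vec_def rev_oedge_def)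
qed

lemma supp_circuit:
  assumes "is_circuit tail head C" shows "supp (circuit_vec C) = C"
proof (rule set_eqI)
  fix d show "d \<in> supp (circuit_vec C) \<longleftrightarrow> d \<in> C"
  proof (cases "d\<in>C")
    case True then have "rev_oedge d \<notin> C" by (rule circuit_no_rev[OF assms])
    then show ?thesis using True by (simp add: supp_def ochain_circuit[OF assms])
  next
    case False then show ?thesis by (simp add: supp_def ochain_circuit[OF assms])
  qed
qed

lemma inner_circuit:
  assumes "is_circuit tail head C"
  shows "x \<bullet> circuit_vec C = (\<Sum>d\<in>C. ochain x d)"
proof -
  have fin: "finite C" using circuit_basic[OF assms] by simp
  have "(\<Sum>d\<in>C. ochain x d) = (\<Sum>e\<in>UNIV. \<Sum>d\<in>{d\<in>C. fst d = e}. ochain x d)"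
    by (rule sum.group[symmetric]) (use fin in auto)
  also have "\<dots> = (\<Sum>e\<in>UNIV. x $ e * circuit_vec C $ e)"
  proof (rule sum.cong[OF refl])
    fix e
    have nr: "(e,False) \<in> C \<Longrightarrow> (e,True) \<notin> C" "(e,True) \<in> C \<Longrightarrow> (e,False) \<notin> C"
      using circuit_no_rev[OF assms, of "(e,True)"] circuit_no_rev[OF assms, of "(e,False)"]
      by (auto simp: rev_oedge_def)
    show "(\<Sum>d\<in>{d\<in>C. fst d = e}. ochain x d) = x $ e * circuit_vec C $ e"
    proof (cases "(e,True) \<in> C")
      case True
      then have "{d\<in>C. fst d = e} = {(e,True)}" using nr by (simp add: fst_fiber)
      then show ?thesis using True by (simp add: circuit_vec_def ochain_def)
    next
      case F: False
      show ?thesis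
      proof (cases "(e,False) \<in> C")
        case True
        then have "{d\<in>C. fst d = e} = {(e,False)}" using F by (simp add: fst_fiber)
        then show ?thesis using True F by (simp add: circuit_vec_def ochain_def)
      next
        case False
        then have "{d\<in>C. fst d = e} = {}" using F by (simp add: fst_fiber)
        then show ?thesis using False F by (simp only:) (simp add: circuit_vec_def)
      qed
    qed
  qed
  finally show ?thesis by (simp add: inner_vec_def)
qed

lemma q_circuit:
  assumes "is_circuit tail head C"
  shows "qf (circuit_vec C) = real (card C)"
proof -
  have "\<forall>d\<in>C. ochain (circuit_vec C) d = 1"
  proof
    fix d assume dC: "d \<in> C"
    have "rev_oedge d \<notin> C" by (rule circuit_no_rev[OF assms dC])
    then show "ochain (circuit_vec C) d = 1" using dC by (simp add: ochain_circuit[OF assms])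
  qed
  then show ?thesis unfolding qf_def inner_circuit[OF assms] by simp
qed


lemma card_fiber_inj:
  assumes "finite C" "inj_on f C"
  shows "card {d\<in>C. f d = v} = card (f ` C \<inter> {v})"
proof -
  have "f ` {d\<in>C. f d = v} = f ` C \<inter> {v}" by auto
  moreover have "inj_on f {d\<in>C. f d = v}" using assms(2) by (rule inj_on_subset) auto
  ultimately show ?thesis by (metis card_image)
qed

lemma circuit_is_flow:
  assumes "is_circuit tail head C"
  shows "is_flow tail head (circuit_vec C)"
  unfolding is_flow_def
proof
  fix v
  have fin: "finite C" and io: "inj_on ot C" and ih: "inj_on oh C" and eq: "ot ` C = oh ` C"
    using circuit_basic[OF assms] by auto
  have "(\<Sum>d\<in>{d. ot d = v}. ochain (circuit_vec C) d)
      = (\<Sum>d\<in>{d. ot d = v}. of_bool (d \<in> C)) - (\<Sum>d\<in>{d. ot d = v}. of_bool (rev_oedge d \<in> C))"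
    unfolding ochain_circuit[OF assms] by (simp add: sum_subtractf)
  also have "\<dots> = real (card ({d. ot d = v} \<inter> C)) - real (card ({d. ot d = v} \<inter> {d. rev_oedge d \<in> C}))"
    by (simp add: sum_of_bool_eq)
  also have "card ({d. ot d = v} \<inter> {d. rev_oedge d \<in> C}) = card {d\<in>C. oh d = v}"
  proof -
    have "{d. ot d = v} \<inter> {d. rev_oedge d \<in> C} = rev_oedge ` {d\<in>C. oh d = v}"
    proof (rule set_eqI)
      fix d show "d \<in> {d. ot d = v} \<inter> {d. rev_oedge d \<in> C} \<longleftrightarrow> d \<in> rev_oedge ` {d\<in>C. oh d = v}"
      proof
        assume "d \<in> {d. ot d = v} \<inter> {d. rev_oedge d \<in> C}"
        then have "rev_oedge d \<in> {d\<in>C. oh d = v}" by simp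
        then have "rev_oedge (rev_oedge d) \<in> rev_oedge ` {d\<in>C. oh d = v}" by (rule imageI)
        then show "d \<in> rev_oedge ` {d\<in>C. oh d = v}" by simp
      next
        assume "d \<in> rev_oedge ` {d\<in>C. oh d = v}"
        then obtain d' where "d' \<in> C" "oh d' = v" "d = rev_oedge d'" by blast
        then show "d \<in> {d. ot d = v} \<inter> {d. rev_oedge d \<in> C}" by simp
      qed
    qed
    then show ?thesis using card_image[OF inj_on_subset[OF inj_rev_oedge, of "{d\<in>C. oh d = v}"]] by simp
  qed
  also have "{d. ot d = v} \<inter> C = {d\<in>C. ot d = v}" by blast
  also have "card {d\<in>C. ot d = v} = card {d\<in>C. oh d = v}"
    using card_fiber_inj[OF fin io] card_fiber_inj[OF fin ih] eq by simp
  finally show "(\<Sum>d\<in>{d. ot d = v}. ochain (circuit_vec C) d) = 0" by simp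
qed

lemma circuit_int_flow:
  assumes "is_circuit tail head C"
  shows "circuit_vec C \<in> int_flows tail head"
  using circuit_is_flow[OF assms] unfolding int_flows_def flows_def
  by (auto simp: circuit_vec_def)

lemma finite_Xi1: "finite (Xi1 tail head)"
proof -
  have "Xi1 tail head \<subseteq> circuit_vec ` UNIV" unfolding Xi1_def by auto
  moreover have "finite (circuit_vec ` (UNIV :: 'e oedge set set))" by simp
  ultimately show ?thesis by (rule finite_subset)
qed


fun walk :: "'v \<Rightarrow> 'e oedge list \<Rightarrow> 'v \<Rightarrow> bool" where
  "walk u [] v \<longleftrightarrow> u = v"
| "walk u (d # ds) v \<longleftrightarrow> ot d = u \<and> walk (oh d) ds v"

lemma walk_append: "walk u (xs @ ys) v \<longleftrightarrow> (\<exists>m. walk u xs m \<and> walk m ys v)"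
  by (induction xs arbitrary: u) auto

lemma walk_nth: "walk u ws v \<Longrightarrow> i + 1 < length ws \<Longrightarrow> oh (ws ! i) = ot (ws ! (i + 1))"
proof (induction ws arbitrary: u i)
  case Nil then show ?case by simp
next
  case (Cons d ds)
  show ?case
  proof (cases i)
    case 0
    then obtain d' ds' where "ds = d' # ds'" using Cons.prems by (cases ds) auto
    then show ?thesis using Cons.prems 0 by simp
  next
    case (Suc k)
    then show ?thesis using Cons.IH[of "oh d" k] Cons.prems by simp
  qed
qed

lemma walk_last: "walk u ws v \<Longrightarrow> ws \<noteq> [] \<Longrightarrow> oh (last ws) = v"
proof (induction ws arbitrary: u)
  case Nil then show ?case by simp
next
  case (Cons d ds) then show ?case by (cases ds) auto
qed

lemma not_distinct_split:
  assumes "\<not> distinct (map f ws)"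
  shows "\<exists>A a B b C. ws = A @ a # B @ b # C \<and> f a = f b"
proof -
  obtain i j where ij: "i < j" "j < length ws" "f (ws ! i) = f (ws ! j)"
    using assms unfolding distinct_conv_nth
    by (auto simp: nth_eq_iff_index_eq) (metis linorder_neqE_nat)
  define A where "A = take i ws"
  define B where "B = take (j - i - 1) (drop (Suc i) ws)"
  define C where "C = drop (Suc j) ws"
  have "ws = take i ws @ ws ! i # drop (Suc i) ws"
    using ij by (simp add: id_take_nth_drop)
  moreover have "drop (Suc i) ws = B @ ws ! j # C"
  proof -
    have l: "j - i - 1 < length (drop (Suc i) ws)" using ij by simp
    have "drop (Suc i) ws = take (j - i - 1) (drop (Suc i) ws) @ (drop (Suc i) ws) ! (j - i - 1)
             # drop (Suc (j - i - 1)) (drop (Suc i) ws)"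
      by (rule id_take_nth_drop[OF l])
    moreover have "(drop (Suc i) ws) ! (j - i - 1) = ws ! j" using ij by simp
    moreover have "drop (Suc (j - i - 1)) (drop (Suc i) ws) = drop (Suc j) ws" using ij by simp
    ultimately show ?thesis unfolding B_def C_def by simp
  qed
  ultimately have "ws = A @ ws ! i # B @ ws ! j # C" unfolding A_def by simp
  then show ?thesis using ij(3) by blast
qed

lemma same_fst_rev: "fst a = fst b \<Longrightarrow> a \<noteq> b \<Longrightarrow> b = rev_oedge a"
  by (cases a; cases b) (auto simp: rev_oedge_def)

lemma closed_walk_nonneg:
  assumes hyp: "\<And>C. is_circuit tail head C \<Longrightarrow> 0 \<le> (\<Sum>d\<in>C. cst x d)"
    and w: "walk u ws u"
  shows "0 \<le> wt x ws"
  using w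
proof (induction "length ws" arbitrary: ws u rule: less_induct)
  case less
  show ?case
  proof (cases "ws = []")
    case True then show ?thesis by (simp add: wt_def)
  next
    case ne: False
    show ?thesis
    proof (cases "distinct (map ot ws)")
      case False
      then obtain A a B b C where ws: "ws = A @ a # B @ b # C" and ab: "ot a = ot b"
        using not_distinct_split by blast
      obtain m1 where m1: "walk u A m1" "walk m1 (a # B @ b # C) u"
        using less.prems ws walk_append by blast
      then have a1: "ot a = m1" and "walk (oh a) (B @ b # C) u" by auto
      then obtain m2 where m2: "walk (oh a) B m2" "walk m2 (b # C) u" using walk_append by blast
      then have b1: "ot b = m2" and "walk (oh b) C u" by auto
      have w1: "walk m1 (a # B) m1" using a1 b1 ab m2(1) by simp
      have w2: "walk u (A @ b # C) u" using m1(1) m2(2) a1 b1 ab walk_append by metis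
      have "0 \<le> wt x (a # B)" using less.hyps[OF _ w1] ws by simp
      moreover have "0 \<le> wt x (A @ b # C)" using less.hyps[OF _ w2] ws by simp
      moreover have "wt x ws = wt x (a # B) + wt x (A @ b # C)" using ws by (simp add: wt_def)
      ultimately show ?thesis by linarith
    next
      case dt: True
      show ?thesis
      proof (cases "distinct (map fst ws)")
        case False
        then obtain A a B b C where ws: "ws = A @ a # B @ b # C" and ab: "fst a = fst b"
          using not_distinct_split by blast
        have "a \<noteq> b" using dt ws by auto
        then have b: "b = rev_oedge a" using ab same_fst_rev by blast
        obtain m1 where m1: "walk u A m1" "walk m1 (a # B @ b # C) u"
          using less.prems ws walk_append by blast
        then have a1: "ot a = m1" and "walk (oh a) (B @ b # C) u" by auto
        then obtain m2 where m2: "walk (oh a) B m2" "walk m2 (b # C) u" using walk_append by blast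
        then have b1: "ot b = m2" and wc: "walk (oh b) C u" by auto
        have B: "B = []"
        proof (rule ccontr)
          assume "B \<noteq> []"
          then obtain c B' where "B = c # B'" by (cases B) auto
          then have "ot c = ot b" using m2(1) b by simp
          then show False using dt ws \<open>B = c # B'\<close> by auto
        qed
        have C: "C = []"
        proof (rule ccontr)
          assume "C \<noteq> []"
          then obtain c C' where "C = c # C'" by (cases C) auto
          then have "ot c = ot a" using wc b by simp
          then show False using dt ws \<open>C = c # C'\<close> by auto
        qed
        have u: "u = ot a" using wc C b by simp
        have A: "A = []"
        proof (rule ccontr)
          assume "A \<noteq> []"
          then obtain c A' where "A = c # A'" by (cases A) auto
          then have "ot c = ot a" using m1(1) u by simp
          then show False using dt ws \<open>A = c # A'\<close> by auto
        qed
        have "wt x ws = 2" using ws A B C b by (simp add: wt_def cst_def)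
        then show ?thesis by simp
      next
        case df: True
        have circ: "is_circuit tail head (set ws)"
          unfolding is_circuit_def
        proof (intro exI conjI)
          show "1 \<le> length ws" using ne by (cases ws) auto
          show "distinct (map fst ws)" by (rule df)
          show "distinct (map ot ws)" by (rule dt)
          show "set ws = set ws" ..
          show "\<forall>i<length ws. oh (ws ! i) = ot (ws ! ((i + 1) mod length ws))"
          proof (intro allI impI)
            fix i assume i: "i < length ws"
            show "oh (ws ! i) = ot (ws ! ((i + 1) mod length ws))"
            proof (cases "i + 1 < length ws")
              case True then show ?thesis using walk_nth[OF less.prems] by simp
            next
              case False
              have i0: "i + 1 = length ws" using i False by linarith
              then have i1: "i = length ws - 1" "(i + 1) mod length ws = 0" by simp_all
              have "oh (ws ! i) = u" using walk_last[OF less.prems ne] i1 ne by (simp add: last_conv_nth)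
              moreover have "ot (ws ! 0) = u" using less.prems ne by (cases ws) auto
              ultimately show ?thesis using i1 by simp
            qed
          qed
        qed
        have "distinct ws" using df by (simp add: distinct_map)
        then have "wt x ws = (\<Sum>d\<in>set ws. cst x d)" by (simp add: wt_def sum_list_distinct_conv_sum_set)
        then show ?thesis using hyp[OF circ] by simp
      qed
    qed
  qed
qed

lemma walk_exists:
  assumes "graph_connected tail head"
  shows "\<exists>ws. walk u ws v"
proof -
  have "(u, v) \<in> ({(tail e, head e) | e. True} \<union> {(head e, tail e) | e. True})\<^sup>*"
    using assms unfolding graph_connected_def by blast
  then show ?thesis
  proof (induction rule: rtrancl_induct)
    case base then show ?case by (intro exI[of _ "[]"]) simp
  next
    case (step y z)
    then obtain ws where ws: "walk u ws y" by blast
    from step(2) obtain d where d: "ot d = y" "oh d = z"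
    proof
      assume "(y, z) \<in> {(tail e, head e) | e. True}"
      then obtain e where "y = tail e" "z = head e" by blast
      then show ?thesis using that[of "(e, True)"] by (simp add: otail_def ohead_def)
    next
      assume "(y, z) \<in> {(head e, tail e) | e. True}"
      then obtain e where "y = head e" "z = tail e" by blast
      then show ?thesis using that[of "(e, False)"] by (simp add: otail_def ohead_def)
    qed
    have "walk u (ws @ [d]) z" using ws d walk_append by auto
    then show ?case by blast
  qed
qed

definition pot :: "real^'e \<Rightarrow> 'v \<Rightarrow> real" where
  "pot x v = Inf {wt x ws | ws. walk undefined ws v}"

lemma pot_reduced_nonneg:
  assumes conn: "graph_connected tail head"
    and hyp: "\<And>C. is_circuit tail head C \<Longrightarrow> 0 \<le> (\<Sum>d\<in>C. cst x d)"
  shows "0 \<le> cst x d + pot x (ot d) - pot x (oh d)"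
proof -
  define r :: 'v where "r = undefined"
  define S where "S v = {wt x ws | ws. walk r ws v}" for v
  have ne: "S v \<noteq> {}" for v using walk_exists[OF conn, of r v] unfolding S_def by auto
  have bdd: "bdd_below (S v)" for v
  proof -
    obtain ws' where ws': "walk v ws' r" using walk_exists[OF conn] by blast
    have "- wt x ws' \<le> s" if "s \<in> S v" for s
    proof -
      obtain ws where s: "s = wt x ws" "walk r ws v" using \<open>s \<in> S v\<close> unfolding S_def by blast
      then have "walk r (ws @ ws') r" using ws' walk_append by blast
      then have "0 \<le> wt x (ws @ ws')" using closed_walk_nonneg[of x r "ws @ ws'"] hyp by blast
      then show ?thesis using s by (simp add: wt_def)
    qed
    then show ?thesis unfolding bdd_below_def by blast
  qed
  have pe: "pot x v = Inf (S v)" for v unfolding pot_def S_def r_def by simp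
  have "pot x (oh d) - cst x d \<le> pot x (ot d)"
    unfolding pe
  proof (rule cInf_greatest[OF ne])
    fix s assume "s \<in> S (ot d)"
    then obtain ws where s: "s = wt x ws" "walk r ws (ot d)" unfolding S_def by blast
    then have "walk r (ws @ [d]) (oh d)" using walk_append by auto
    then have "wt x (ws @ [d]) \<in> S (oh d)" unfolding S_def by blast
    then have "Inf (S (oh d)) \<le> wt x (ws @ [d])" by (rule cInf_lower[OF _ bdd])
    then show "Inf (S (oh d)) - cst x d \<le> s" using s by (simp add: wt_def)
  qed
  then show ?thesis by simp
qed


lemma int_sq_ge_abs: "\<bar>k\<bar> \<le> k*(k::int)"
  by (smt (verit) mult_eq_0_iff mult_le_cancel_left1 mult_minus_right zero_le_square)

lemma sum_oedges: "(\<Sum>d\<in>(UNIV :: 'e oedge set). f d) = (\<Sum>e\<in>UNIV. f (e, True) + f (e, False))"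
proof -
  have "(\<Sum>d\<in>(UNIV :: 'e oedge set). f d) = (\<Sum>e\<in>UNIV. \<Sum>d\<in>{d\<in>UNIV. fst d = e}. f d)"
    by (rule sum.group[symmetric]) auto
  also have "\<dots> = (\<Sum>e\<in>UNIV. f (e, True) + f (e, False))"
  proof (rule sum.cong[OF refl])
    fix e :: 'e
    have "{d\<in>UNIV. fst d = e} = {(e,True), (e,False)}" using fst_fiber[of UNIV e] by auto
    then show "(\<Sum>d\<in>{d\<in>UNIV. fst d = e}. f d) = f (e, True) + f (e, False)" by simp
  qed
  finally show ?thesis .
qed

lemma flow_pot_sum:
  assumes "is_flow tail head mu"
  shows "(\<Sum>e\<in>UNIV. mu $ e * (p (tail e) - p (head e))) = 0"
proof -
  have "0 = (\<Sum>v\<in>UNIV. p v * (\<Sum>d\<in>{d. ot d = v}. ochain mu d))"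
    using assms unfolding is_flow_def by simp
  also have "\<dots> = (\<Sum>v\<in>UNIV. \<Sum>d\<in>{d\<in>UNIV. ot d = v}. p (ot d) * ochain mu d)"
    by (simp add: sum_distrib_left)
  also have "\<dots> = (\<Sum>d\<in>UNIV. p (ot d) * ochain mu d)"
    by (rule sum.group) auto
  also have "\<dots> = (\<Sum>e\<in>UNIV. mu $ e * (p (tail e) - p (head e)))"
    unfolding sum_oedges by (simp add: otail_def ochain_def algebra_simps)
  finally show ?thesis by simp
qed

lemma pot_ineq:
  assumes red: "\<And>d. 0 \<le> cst x d + p (ot d) - p (oh d)"
    and mu: "mu \<in> int_flows tail head"
  shows "2 * (x \<bullet> mu) \<le> qf mu"
proof -
  have fl: "is_flow tail head mu" using mu unfolding int_flows_def flows_def by simp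
  have edge: "mu $ e * (p (head e) - p (tail e)) \<le> mu $ e * mu $ e - 2 * (x $ e * mu $ e)" for e
  proof -
    obtain k where k: "mu $ e = of_int k" using mu unfolding int_flows_def by (auto elim: Ints_cases)
    have sq: "\<bar>mu $ e\<bar> \<le> mu $ e * mu $ e" unfolding k
      using int_sq_ge_abs[of k] by (metis of_int_abs of_int_le_iff of_int_mult)
    have r1: "0 \<le> 1 - 2 * x $ e + p (tail e) - p (head e)"
      using red[of "(e, True)"] by (simp add: cst_def ochain_def otail_def ohead_def)
    have r2: "0 \<le> 1 + 2 * x $ e + p (head e) - p (tail e)"
      using red[of "(e, False)"] by (simp add: cst_def ochain_def otail_def ohead_def)
    show ?thesis
    proof (cases "0 \<le> mu $ e")
      case True
      have "mu $ e * (p (head e) - p (tail e)) \<le> mu $ e * (1 - 2 * x $ e)"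
        using mult_left_mono[OF _ True, of "p (head e) - p (tail e)" "1 - 2 * x $ e"] r1 by simp
      then show ?thesis using sq True by (simp add: algebra_simps)
    next
      case False
      then have nn: "0 \<le> - mu $ e" by simp
      have "(- mu $ e) * (p (tail e) - p (head e)) \<le> (- mu $ e) * (1 + 2 * x $ e)"
        using mult_left_mono[OF _ nn, of "p (tail e) - p (head e)" "1 + 2 * x $ e"] r2 by simp
      then show ?thesis using sq False by (simp add: algebra_simps)
    qed
  qed
  have "(\<Sum>e\<in>UNIV. mu $ e * (p (head e) - p (tail e))) = 0"
  proof -
    have "(\<Sum>e\<in>UNIV. mu $ e * (p (head e) - p (tail e))) = (\<Sum>e\<in>UNIV. - (mu $ e * (p (tail e) - p (head e))))"
      by (rule sum.cong) (auto simp: algebra_simps)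
    also have "\<dots> = 0" unfolding sum_negf flow_pot_sum[OF fl, of p] by simp
    finally show ?thesis .
  qed
  moreover have "(\<Sum>e\<in>UNIV. mu $ e * (p (head e) - p (tail e))) \<le> (\<Sum>e\<in>UNIV. mu $ e * mu $ e - 2 * (x $ e * mu $ e))"
    by (rule sum_mono) (rule edge)
  moreover have "(\<Sum>e\<in>UNIV. mu $ e * mu $ e - 2 * (x $ e * mu $ e)) = qf mu - 2 * (x \<bullet> mu)"
    by (simp add: qf_def inner_vec_def sum_subtractf sum_distrib_left)
  ultimately show ?thesis by linarith
qed

lemma circuit_weight:
  assumes "is_circuit tail head C"
  shows "(\<Sum>d\<in>C. cst x d) = qf (circuit_vec C) - 2 * (x \<bullet> circuit_vec C)"
  unfolding q_circuit[OF assms] inner_circuit[OF assms] cst_def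
  by (simp add: sum_subtractf sum_distrib_left)

lemma qf_diff: "qf (x - y) = qf x - 2 * (x \<bullet> y) + qf y"
  unfolding qf_def by (simp add: inner_diff_left inner_diff_right inner_commute)

lemma vor_imp:
  assumes "x \<in> voronoi_cell tail head" "lam \<in> Xi1 tail head"
  shows "2 * (x \<bullet> lam) \<le> qf lam"
proof -
  obtain C where C: "is_circuit tail head C" "lam = circuit_vec C" using assms(2) unfolding Xi1_def by blast
  have "lam \<in> int_flows tail head" using circuit_int_flow[OF C(1)] C(2) by simp
  then have "qf x \<le> qf (x - lam)" using assms(1) unfolding voronoi_cell_def by blast
  then show ?thesis unfolding qf_diff by simp
qed

lemma vor_iff:
  assumes conn: "graph_connected tail head"
  shows "x \<in> voronoi_cell tail head \<longleftrightarrow>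
     x \<in> flows tail head \<and> (\<forall>lam\<in>Xi1 tail head. 2 * (x \<bullet> lam) \<le> qf lam)"
proof
  assume "x \<in> voronoi_cell tail head"
  then show "x \<in> flows tail head \<and> (\<forall>lam\<in>Xi1 tail head. 2 * (x \<bullet> lam) \<le> qf lam)"
    using vor_imp by (auto simp: voronoi_cell_def)
next
  assume a: "x \<in> flows tail head \<and> (\<forall>lam\<in>Xi1 tail head. 2 * (x \<bullet> lam) \<le> qf lam)"
  have hyp: "0 \<le> (\<Sum>d\<in>C. cst x d)" if "is_circuit tail head C" for C
  proof -
    have "circuit_vec C \<in> Xi1 tail head" using that unfolding Xi1_def by blast
    then show ?thesis using a circuit_weight[OF that, of x] by auto
  qed
  have red: "\<And>d. 0 \<le> cst x d + pot x (ot d) - pot x (oh d)"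
    using pot_reduced_nonneg[OF conn] hyp by blast
  show "x \<in> voronoi_cell tail head"
    unfolding voronoi_cell_def
  proof (intro CollectI conjI ballI)
    show "x \<in> flows tail head" using a by simp
    fix mu assume "mu \<in> int_flows tail head"
    then have "2 * (x \<bullet> mu) \<le> qf mu" by (rule pot_ineq[OF red])
    then show "qf x \<le> qf (x - mu)" unfolding qf_diff by simp
  qed
qed


definition red :: "real^'e \<Rightarrow> 'e oedge \<Rightarrow> real" where
  "red x d = cst x d + pot x (ot d) - pot x (oh d)"

lemma red_nonneg:
  assumes conn: "graph_connected tail head" and x: "x \<in> voronoi_cell tail head"
  shows "0 \<le> red x d"
proof -
  have hyp: "0 \<le> (\<Sum>d\<in>C. cst x d)" if "is_circuit tail head C" for C
  proof -
    have "circuit_vec C \<in> Xi1 tail head" using that unfolding Xi1_def by blast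
    then show ?thesis using vor_imp[OF x] circuit_weight[OF that, of x] by auto
  qed
  show ?thesis unfolding red_def using pot_reduced_nonneg[OF conn] hyp by blast
qed

lemma red_rev: "red x d + red x (rev_oedge d) = 2"
  unfolding red_def cst_def by simp

lemma red_circuit_sum:
  assumes "is_circuit tail head C"
  shows "(\<Sum>d\<in>C. red x d) = (\<Sum>d\<in>C. cst x d)"
proof -
  have fin: "finite C" and io: "inj_on ot C" and ih: "inj_on oh C" and eq: "ot ` C = oh ` C"
    using circuit_basic[OF assms] by auto
  have "(\<Sum>d\<in>C. pot x (ot d)) = (\<Sum>v\<in>ot ` C. pot x v)" by (simp add: sum.reindex[OF io])
  also have "\<dots> = (\<Sum>v\<in>oh ` C. pot x v)" using eq by simp
  also have "\<dots> = (\<Sum>d\<in>C. pot x (oh d))" by (simp add: sum.reindex[OF ih])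
  finally have "(\<Sum>d\<in>C. pot x (ot d)) = (\<Sum>d\<in>C. pot x (oh d))" .
  then show ?thesis unfolding red_def by (simp add: sum.distrib sum_subtractf)
qed

lemma tight_iff:
  assumes conn: "graph_connected tail head" and x: "x \<in> voronoi_cell tail head"
    and C: "is_circuit tail head C"
  shows "2 * (x \<bullet> circuit_vec C) = qf (circuit_vec C) \<longleftrightarrow> (\<forall>d\<in>C. red x d = 0)"
proof -
  have fin: "finite C" using circuit_basic[OF C] by simp
  have "2 * (x \<bullet> circuit_vec C) = qf (circuit_vec C) \<longleftrightarrow> (\<Sum>d\<in>C. red x d) = 0"
    using red_circuit_sum[OF C, of x] circuit_weight[OF C, of x] by auto
  also have "\<dots> \<longleftrightarrow> (\<forall>d\<in>C. red x d = 0)"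
    using sum_nonneg_eq_0_iff[OF fin, of "red x"] red_nonneg[OF conn x] by blast
  finally show ?thesis .
qed

lemma flows_lin:
  assumes "x \<in> flows tail head" "y \<in> flows tail head"
  shows "a *\<^sub>R x + b *\<^sub>R y \<in> flows tail head"
proof -
  have oc: "ochain (a *\<^sub>R x + b *\<^sub>R y) d = a * ochain x d + b * ochain y d" for d
    by (simp add: ochain_def)
  show ?thesis using assms unfolding flows_def is_flow_def
    by (simp add: oc sum.distrib sum_distrib_left[symmetric])
qed

definition tight :: "real^'e \<Rightarrow> (real^'e) set" where
  "tight x = {lam \<in> Xi1 tail head. 2 * (x \<bullet> lam) = qf lam}"

definition LF :: "(real^'e) set \<Rightarrow> (real^'e) set" where
  "LF F = {lam \<in> Xi1 tail head. F \<subseteq> Hlam tail head lam}"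

lemma vor_flows: "voronoi_cell tail head \<subseteq> flows tail head"
  unfolding voronoi_cell_def by auto

lemma face_point:
  assumes F: "F face_of voronoi_cell tail head" "F \<noteq> {}"
  shows "\<exists>x\<in>F. LF F = tight x"
proof -
  have FV: "F \<subseteq> voronoi_cell tail head" using F(1) face_of_imp_subset by blast
  have cvx: "convex F" using F(1) face_of_imp_convex by blast
  have fin: "finite (tight y)" for y unfolding tight_def using finite_Xi1 by simp
  obtain x0 where "x0 \<in> F" using F(2) by blast
  then obtain x where x: "x \<in> F" and xmin: "\<And>y. y \<in> F \<Longrightarrow> card (tight x) \<le> card (tight y)"
    using ex_has_least_nat[of "\<lambda>y. y \<in> F" x0 "\<lambda>y. card (tight y)"] by blast
  have sub: "tight x \<subseteq> tight y" if y: "y \<in> F" for y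
  proof -
    define m where "m = (1/2) *\<^sub>R x + (1/2) *\<^sub>R y"
    have mF: "m \<in> F" unfolding m_def by (rule convexD[OF cvx x y]) auto
    have "tight m \<subseteq> tight x \<inter> tight y"
    proof
      fix lam assume "lam \<in> tight m"
      then have l: "lam \<in> Xi1 tail head" "2 * (m \<bullet> lam) = qf lam" unfolding tight_def by auto
      have "2 * (x \<bullet> lam) \<le> qf lam" using vor_imp[OF _ l(1)] x FV by blast
      moreover have "2 * (y \<bullet> lam) \<le> qf lam" using vor_imp[OF _ l(1)] y FV by blast
      moreover have "2 * (m \<bullet> lam) = x \<bullet> lam + y \<bullet> lam" unfolding m_def by (simp add: inner_add_left)
      ultimately show "lam \<in> tight x \<inter> tight y" using l unfolding tight_def by auto
    qed
    moreover have "card (tight x) \<le> card (tight m)" using xmin[OF mF] .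
    ultimately have "tight m = tight x"
      using card_subset_eq[OF fin, of "tight m"] card_mono[OF fin, of "tight m" x] by force
    then show ?thesis using \<open>tight m \<subseteq> tight x \<inter> tight y\<close> by blast
  qed
  have "LF F = tight x"
  proof
    show "LF F \<subseteq> tight x" using x unfolding LF_def tight_def Hlam_def by auto
    show "tight x \<subseteq> LF F"
    proof
      fix lam assume l: "lam \<in> tight x"
      have "F \<subseteq> Hlam tail head lam"
      proof
        fix y assume "y \<in> F"
        then have "lam \<in> tight y" using sub l by blast
        moreover have "y \<in> flows tail head" using \<open>y \<in> F\<close> FV vor_flows by blast
        ultimately show "y \<in> Hlam tail head lam" unfolding tight_def Hlam_def by auto
      qed
      then show "lam \<in> LF F" using l unfolding LF_def tight_def by auto
    qed
  qed
  then show ?thesis using x by blast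
qed


lemma face_eq:
  assumes conn: "graph_connected tail head"
    and F: "F face_of voronoi_cell tail head" and x: "x \<in> F" and LFx: "LF F = tight x"
  shows "F = {y \<in> voronoi_cell tail head. \<forall>lam\<in>tight x. 2 * (y \<bullet> lam) = qf lam}"
proof
  have FV: "F \<subseteq> voronoi_cell tail head" using F face_of_imp_subset by blast
  show "F \<subseteq> {y \<in> voronoi_cell tail head. \<forall>lam\<in>tight x. 2 * (y \<bullet> lam) = qf lam}"
  proof
    fix y assume y: "y \<in> F"
    have "\<forall>lam\<in>tight x. 2 * (y \<bullet> lam) = qf lam"
      using y unfolding LFx[symmetric] LF_def Hlam_def by auto
    then show "y \<in> {y \<in> voronoi_cell tail head. \<forall>lam\<in>tight x. 2 * (y \<bullet> lam) = qf lam}"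
      using y FV by blast
  qed
  show "{y \<in> voronoi_cell tail head. \<forall>lam\<in>tight x. 2 * (y \<bullet> lam) = qf lam} \<subseteq> F"
  proof
    fix y assume "y \<in> {y \<in> voronoi_cell tail head. \<forall>lam\<in>tight x. 2 * (y \<bullet> lam) = qf lam}"
    then have yV: "y \<in> voronoi_cell tail head" and yt: "\<And>lam. lam \<in> tight x \<Longrightarrow> 2 * (y \<bullet> lam) = qf lam"
      by auto
    have xV: "x \<in> voronoi_cell tail head" using x FV by blast
    show "y \<in> F"
    proof (cases "y = x")
      case True then show ?thesis using x by simp
    next
      case ne: False
      define N where "N = Xi1 tail head - tight x"
      define s where "s lam = qf lam - 2 * (x \<bullet> lam)" for lam
      define a where "a lam = 2 * ((x - y) \<bullet> lam)" for lam
      define eps where "eps = Min (insert 1 ((\<lambda>lam. s lam / (\<bar>a lam\<bar> + 1)) ` N))"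
      have finN: "finite N" unfolding N_def using finite_Xi1 by simp
      have spos: "0 < s lam" if "lam \<in> N" for lam
        using that vor_imp[OF xV] unfolding N_def tight_def s_def by force
      have epos: "0 < eps" unfolding eps_def
        using finN spos by (subst Min_gr_iff) auto
      have eps_le: "eps \<le> s lam / (\<bar>a lam\<bar> + 1)" if "lam \<in> N" for lam
        unfolding eps_def using finN that by (intro Min_le) auto
      define z where "z = (1 + eps) *\<^sub>R x + (- eps) *\<^sub>R y"
      have zfl: "z \<in> flows tail head" unfolding z_def
        by (rule flows_lin) (use xV yV vor_flows in auto)
      have zl: "2 * (z \<bullet> lam) = 2 * (x \<bullet> lam) + eps * a lam" for lam
        unfolding z_def a_def by (simp add: inner_add_left inner_diff_left algebra_simps)
      have zV: "z \<in> voronoi_cell tail head"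
        unfolding vor_iff[OF conn]
      proof (intro conjI ballI zfl)
        fix lam assume l: "lam \<in> Xi1 tail head"
        show "2 * (z \<bullet> lam) \<le> qf lam"
        proof (cases "lam \<in> tight x")
          case True
          then have "2 * (x \<bullet> lam) = qf lam" "2 * (y \<bullet> lam) = qf lam" using yt unfolding tight_def by auto
          then have "a lam = 0" unfolding a_def by (simp add: inner_diff_left)
          then show ?thesis using zl \<open>2 * (x \<bullet> lam) = qf lam\<close> by simp
        next
          case False
          then have lN: "lam \<in> N" using l unfolding N_def by simp
          have d: "0 < \<bar>a lam\<bar> + 1" by simp
          have "eps * (\<bar>a lam\<bar> + 1) \<le> s lam"
            using eps_le[OF lN] d by (simp add: pos_le_divide_eq)
          moreover have "eps * a lam \<le> eps * (\<bar>a lam\<bar> + 1)"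
            using epos by (intro mult_left_mono) auto
          ultimately show ?thesis using zl[of lam] unfolding s_def by linarith
        qed
      qed
      have "x \<in> open_segment y z"
        unfolding in_segment
      proof (intro conjI exI)
        show "y \<noteq> z"
        proof
          assume "y = z"
          then have "(1 + eps) *\<^sub>R (x - y) = 0" unfolding z_def by (simp add: algebra_simps)
          then show False using ne epos by simp
        qed
        show "0 < 1 / (1 + eps)" using epos by simp
        show "1 / (1 + eps) < 1" using epos by simp
        show "x = (1 - 1 / (1 + eps)) *\<^sub>R y + (1 / (1 + eps)) *\<^sub>R z"
        proof -
          have "(1 - 1 / (1 + eps)) *\<^sub>R y + (1 / (1 + eps)) *\<^sub>R z
              = (1 / (1 + eps)) *\<^sub>R (eps *\<^sub>R y + z)"
            using epos by (simp add: algebra_simps scaleR_add_right field_simps)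
          also have "eps *\<^sub>R y + z = (1 + eps) *\<^sub>R x" unfolding z_def by simp
          also have "(1 / (1 + eps)) *\<^sub>R ((1 + eps) *\<^sub>R x) = x" using epos by simp
          finally show ?thesis by simp
        qed
      qed
      then show "y \<in> F" using F x yV zV unfolding face_of_def by blast
    qed
  qed
qed


definition DD :: "(real^'e) set \<Rightarrow> 'e oedge set" where
  "DD F = \<Union>{supp lam | lam. lam \<in> Xi1 tail head \<and> F \<subseteq> Hlam tail head lam}"

lemma phi_eq: "phi tail head F = (fst ` DD F, DD F)"
  unfolding phi_def DD_def Let_def by simp

lemma DD_mem: "d \<in> DD F \<longleftrightarrow> (\<exists>C. is_circuit tail head C \<and> circuit_vec C \<in> LF F \<and> d \<in> C)"
proof
  assume "d \<in> DD F"
  then obtain lam where l: "lam \<in> Xi1 tail head" "F \<subseteq> Hlam tail head lam" "d \<in> supp lam"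
    unfolding DD_def by blast
  then obtain C where C: "is_circuit tail head C" "lam = circuit_vec C" unfolding Xi1_def by blast
  then show "\<exists>C. is_circuit tail head C \<and> circuit_vec C \<in> LF F \<and> d \<in> C"
    using l supp_circuit[OF C(1)] unfolding LF_def by auto
next
  assume "\<exists>C. is_circuit tail head C \<and> circuit_vec C \<in> LF F \<and> d \<in> C"
  then obtain C where C: "is_circuit tail head C" "circuit_vec C \<in> LF F" "d \<in> C" by blast
  then show "d \<in> DD F" unfolding DD_def LF_def using supp_circuit[OF C(1)] by blast
qed

lemma DD_facts:
  assumes conn: "graph_connected tail head" and F: "F \<in> FP tail head"
  shows "\<And>d. d \<in> DD F \<Longrightarrow> rev_oedge d \<notin> DD F"
    and "\<And>C. is_circuit tail head C \<Longrightarrow> C \<subseteq> DD F \<Longrightarrow> circuit_vec C \<in> LF F"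
    and "F = {y \<in> voronoi_cell tail head. \<forall>lam\<in>LF F. 2 * (y \<bullet> lam) = qf lam}"
proof -
  have Ff: "F face_of voronoi_cell tail head" "F \<noteq> {}" using F unfolding FP_def by auto
  obtain x where x: "x \<in> F" "LF F = tight x" using face_point[OF Ff] by blast
  have xV: "x \<in> voronoi_cell tail head" using x(1) face_of_imp_subset[OF Ff(1)] by blast
  have red0: "red x d = 0" if dD: "d \<in> DD F" for d
  proof -
    obtain C where C: "is_circuit tail head C" "circuit_vec C \<in> LF F" "d \<in> C"
      using DD_mem[THEN iffD1, OF dD] by blast
    have "2 * (x \<bullet> circuit_vec C) = qf (circuit_vec C)" using C(2) x(2) unfolding tight_def by auto
    then show ?thesis using tight_iff[OF conn xV C(1)] C(3) by blast
  qed
  show "rev_oedge d \<notin> DD F" if "d \<in> DD F" for d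
  proof
    assume "rev_oedge d \<in> DD F"
    then have "red x (rev_oedge d) = 0" by (rule red0)
    moreover have "red x d = 0" using that by (rule red0)
    ultimately show False using red_rev[of x d] by simp
  qed
  show "circuit_vec C \<in> LF F" if C: "is_circuit tail head C" "C \<subseteq> DD F" for C
  proof -
    have "\<forall>d\<in>C. red x d = 0" using red0 C(2) by blast
    then have "2 * (x \<bullet> circuit_vec C) = qf (circuit_vec C)" using tight_iff[OF conn xV C(1)] by blast
    moreover have "circuit_vec C \<in> Xi1 tail head" using C(1) unfolding Xi1_def by blast
    ultimately show ?thesis using x(2) unfolding tight_def by simp
  qed
  show "F = {y \<in> voronoi_cell tail head. \<forall>lam\<in>LF F. 2 * (y \<bullet> lam) = qf lam}"
    using face_eq[OF conn Ff(1) x(1) x(2)] unfolding x(2) .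
qed

lemma DD_back:
  assumes "d \<in> DD F" shows "(oh d, ot d) \<in> (crel (DD F))\<^sup>*"
proof -
  obtain C where C: "is_circuit tail head C" "circuit_vec C \<in> LF F" "d \<in> C"
    using DD_mem[THEN iffD1, OF assms] by blast
  have "C \<subseteq> DD F" using C DD_mem[of _ F] by blast
  then have "crel C \<subseteq> crel (DD F)" unfolding crel_def by blast
  then show ?thesis using circuit_basic(7)[OF C(1) C(3)] rtrancl_mono by blast
qed

lemma DD_SC:
  assumes conn: "graph_connected tail head" and F: "F \<in> FP tail head"
  shows "strongly_connected_orientation tail head (fst ` DD F) (DD F)"
  unfolding strongly_connected_orientation_def
proof (intro conjI allI impI ballI)
  let ?D = "DD F"
  fix d assume "d \<in> ?D" then show "fst d \<in> fst ` ?D" by simp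
next
  let ?D = "DD F"
  fix e assume "e \<in> fst ` ?D"
  then obtain d where d: "d \<in> ?D" "fst d = e" by blast
  have nr: "rev_oedge d \<notin> ?D" using DD_facts(1)[OF conn F d(1)] .
  show "((e, True) \<in> ?D) \<noteq> ((e, False) \<in> ?D)"
  proof (cases "snd d")
    case True
    then have "d = (e, True)" "rev_oedge d = (e, False)" using d(2) by (auto simp: rev_oedge_def prod_eq_iff)
    then show ?thesis using d(1) nr by simp
  next
    case False
    then have "d = (e, False)" "rev_oedge d = (e, True)" using d(2) by (auto simp: rev_oedge_def prod_eq_iff)
    then show ?thesis using d(1) nr by simp
  qed
next
  let ?D = "DD F"
  let ?R = "{(ot d, oh d) | d. d \<in> ?D}"
  let ?U = "{(tail e, head e) | e. e \<in> fst ` ?D} \<union> {(head e, tail e) | e. e \<in> fst ` ?D}"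
  let ?P = "{(a, b). (a, b) \<in> ?R\<^sup>* \<and> (b, a) \<in> ?R\<^sup>*}"
  have Rc: "?R = crel ?D" unfolding crel_def by simp
  have edge: "(a, b) \<in> ?P" if "d \<in> ?D" "a = ot d" "b = oh d" for a b d
  proof -
    have "(a, b) \<in> ?R" using that by blast
    moreover have "(b, a) \<in> ?R\<^sup>*" using DD_back[OF that(1)] that Rc by simp
    ultimately show ?thesis by auto
  qed
  have UP: "?U \<subseteq> ?P"
  proof
    fix p assume "p \<in> ?U"
    then obtain e where e: "e \<in> fst ` ?D" "p = (tail e, head e) \<or> p = (head e, tail e)" by blast
    obtain d where d: "d \<in> ?D" "fst d = e" using e(1) by blast
    have sym: "(b, a) \<in> ?P" if "(a, b) \<in> ?P" for a b using that by auto
    have "(tail e, head e) \<in> ?P"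
    proof (cases "snd d")
      case True
      then have "ot d = tail e" "oh d = head e" using d(2) by (auto simp: otail_def ohead_def)
      then show ?thesis using edge[OF d(1)] by simp
    next
      case False
      then have "ot d = head e" "oh d = tail e" using d(2) by (auto simp: otail_def ohead_def)
      then show ?thesis using sym edge[OF d(1)] by simp
    qed
    then show "p \<in> ?P" using e(2) sym by auto
  qed
  fix u v assume "(u, v) \<in> ?U\<^sup>*"
  then have "(u, v) \<in> ?P"
  proof (induction rule: rtrancl_induct)
    case base then show ?case by simp
  next
    case (step y z)
    then have "(y, z) \<in> ?P" using UP by blast
    then show ?case using step.IH by (auto intro: rtrancl_trans)
  qed
  then show "(u, v) \<in> ?R\<^sup>*" "(v, u) \<in> ?R\<^sup>*" by auto
qed

lemma DD_antimono:
  assumes "F1 \<subseteq> F2" shows "DD F2 \<subseteq> DD F1"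
  using assms unfolding DD_def by blast

end

theorem mainTheorem7:
  fixes tail head :: "'e::finite \<Rightarrow> 'v::finite"
  assumes "graph_connected tail head"
  shows "(\<forall>F\<in>FP tail head. phi tail head F \<in> SC tail head)
       \<and> inj_on (phi tail head) (FP tail head)
       \<and> (\<forall>F1\<in>FP tail head. \<forall>F2\<in>FP tail head. F1 \<subseteq> F2 \<longrightarrow> sc_le (phi tail head F1) (phi tail head F2))"
proof (intro conjI ballI impI)
  note conn = assms
  fix F assume F: "F \<in> FP tail head"
  show "phi tail head F \<in> SC tail head"
    unfolding phi_eq SC_def using DD_SC[OF conn F] by simp
next
  note conn = assms
  show "inj_on (phi tail head) (FP tail head)"
  proof (rule inj_onI)
    fix F1 F2 assume F1: "F1 \<in> FP tail head" and F2: "F2 \<in> FP tail head"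
      and eq: "phi tail head F1 = phi tail head F2"
    have D: "DD tail head F1 = DD tail head F2" using eq unfolding phi_eq by simp
    have L: "LF tail head F = {lam \<in> Xi1 tail head. supp lam \<subseteq> DD tail head F}"
      if F: "F \<in> FP tail head" for F
    proof
      show "LF tail head F \<subseteq> {lam \<in> Xi1 tail head. supp lam \<subseteq> DD tail head F}"
        unfolding LF_def DD_def by blast
      show "{lam \<in> Xi1 tail head. supp lam \<subseteq> DD tail head F} \<subseteq> LF tail head F"
      proof
        fix lam assume "lam \<in> {lam \<in> Xi1 tail head. supp lam \<subseteq> DD tail head F}"
        then have l: "lam \<in> Xi1 tail head" "supp lam \<subseteq> DD tail head F" by auto
        then obtain C where C: "is_circuit tail head C" "lam = circuit_vec C" unfolding Xi1_def by blast
        then have "C \<subseteq> DD tail head F" using l supp_circuit[OF C(1)] by simp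
        then show "lam \<in> LF tail head F" using DD_facts(2)[OF conn F C(1)] C(2) by simp
      qed
    qed
    have "LF tail head F1 = LF tail head F2" using L[OF F1] L[OF F2] D by simp
    then show "F1 = F2" using DD_facts(3)[OF conn F1] DD_facts(3)[OF conn F2] by simp
  qed
next
  note conn = assms
  fix F1 F2 assume F1: "F1 \<in> FP tail head" and F2: "F2 \<in> FP tail head" and sub: "F1 \<subseteq> F2"
  have D: "DD tail head F2 \<subseteq> DD tail head F1" using DD_antimono[OF sub] .
  show "sc_le (phi tail head F1) (phi tail head F2)"
    unfolding sc_le_def phi_eq fst_conv snd_conv
  proof (intro conjI)
    show "fst ` DD tail head F2 \<subseteq> fst ` DD tail head F1" using D by blast
    show "DD tail head F2 = {d \<in> DD tail head F1. fst d \<in> fst ` DD tail head F2}"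
    proof
      show "DD tail head F2 \<subseteq> {d \<in> DD tail head F1. fst d \<in> fst ` DD tail head F2}" using D by blast
      show "{d \<in> DD tail head F1. fst d \<in> fst ` DD tail head F2} \<subseteq> DD tail head F2"
      proof
        fix d assume "d \<in> {d \<in> DD tail head F1. fst d \<in> fst ` DD tail head F2}"
        then obtain d' where d: "d \<in> DD tail head F1" "d' \<in> DD tail head F2" "fst d = fst d'" by auto
        show "d \<in> DD tail head F2"
        proof (cases "d = d'")
          case True then show ?thesis using d by simp
        next
          case False
          then have "d' = rev_oedge d" using same_fst_rev d(3) by blast
          then have "rev_oedge d \<in> DD tail head F1" using d(2) D by blast
          then show ?thesis using DD_facts(1)[OF conn F1 d(1)] by simp
        qed
      qed
    qed
  qed
qed

end
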